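(* Let $j\ge 0$ be an integer and let $g_0^{j+1},\dots,g_j^{j+1}$ be real numbers with $$g_j^{j+1}>g_{j-1}^{j+1}>\dots>g_0^{j+1}>0,$$ and set $g_{-1}^{j+1}:=0$ (this convention is only needed when $j=0$). For any real numbers $v^0,v^1,\dots,v^{j+1}$ define $${}_g\Delta v:=\sum_{s=0}^{j}\big(v^{s+1}-v^s\big)g_s^{j+1},\qquad {}_g\Delta (v^2):=\sum_{s=0}^{j}\big((v^{s+1})^2-(v^s)^2\big)g_s^{j+1}.$$ Then $$v^{j+1}\,{}_g\Delta v\;\ge\;\tfrac12\,{}_g\Delta(v^2)+\frac{1}{2g_j^{j+1}}\big({}_g\Delta v\big)^2,$$ $$v^{j}\,{}_g\Delta v\;\ge\;\tfrac12\,{}_g\Delta(v^2)-\frac{1}{2\big(g_j^{j+1}-g_{j-1}^{j+1}\big)}\big({}_g\Delta v\big)^2.$$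
   Context: The paper states this for every $j=0,1,\dots,M-1$ and for functions $v$ defined on a time mesh $0=t_0<t_1<\dots<t_M=T$, with $v^s=v(t_s)$; the expression ${}_g\Delta v$ is a discrete analog of the Caputo fractional derivative at time level $j+1$. *)

theory Defs
  imports Complex_Main
begin

text \<open>Discrete Caputo-type difference at level j+1 with weights g s = g_s^{j+1}.\<close>
definition gDelta :: "nat \<Rightarrow> (nat \<Rightarrow> real) \<Rightarrow> (nat \<Rightarrow> real) \<Rightarrow> real" where
  "gDelta j g v = (\<Sum>s=0..j. (v (Suc s) - v s) * g s)"

definition gDelta_sq :: "nat \<Rightarrow> (nat \<Rightarrow> real) \<Rightarrow> (nat \<Rightarrow> real) \<Rightarrow> real" where
  "gDelta_sq j g v = (\<Sum>s=0..j. ((v (Suc s))^2 - (v s)^2) * g s)"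

definition gprev :: "nat \<Rightarrow> (nat \<Rightarrow> real) \<Rightarrow> real" where
  "gprev j g = (if j = 0 then 0 else g (j - 1))"

end

theory Submission
  imports Defs
begin

definition dd :: "(nat \<Rightarrow> real) \<Rightarrow> nat \<Rightarrow> real" where
  "dd g m = g m - (if m = 0 then 0 else g (m - 1))"

lemma abel: "(\<Sum>s=0..j. (S s - S (Suc s)) * g s) = (\<Sum>m=0..j. S m * dd g m) - S (Suc j) * g j"
  by (induction j) (auto simp: dd_def algebra_simps)

lemma sum_dd: "(\<Sum>m=0..j. dd g m) = g j"
  by (induction j) (auto simp: dd_def)

lemma abel_sq: "(\<Sum>s=0..j. ((S s)^2 - (S (Suc s))^2) * g s) = (\<Sum>m=0..j. (S m)^2 * dd g m) - (S (Suc j))^2 * g j"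
  using abel[where S="\<lambda>m. (S m)^2" and j=j and g=g] by simp

theorem lemma1:
  fixes j :: nat and g v :: "nat \<Rightarrow> real"
  assumes pos: "g 0 > 0"
    and incr: "\<And>s. s < j \<Longrightarrow> g s < g (Suc s)"
  shows "v (Suc j) * gDelta j g v \<ge> gDelta_sq j g v / 2 + (gDelta j g v)^2 / (2 * g j) \<and>
         v j * gDelta j g v \<ge> gDelta_sq j g v / 2 - (gDelta j g v)^2 / (2 * (g j - gprev j g))"
proof -
  define V where "V = v (Suc j)"
  define S where "S m = V - v m" for m
  have vS: "v m = V - S m" for m by (simp add: S_def)
  have SS: "S (Suc j) = 0" by (simp add: S_def V_def)
  have ddpos: "dd g m > 0" if "m \<le> j" for m
  proof (cases m)
    case 0 then show ?thesis using pos by (simp add: dd_def)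
  next
    case (Suc k) then show ?thesis using incr[of k] that by (simp add: dd_def)
  qed
  define D where "D = gDelta j g v"
  define E where "E = (\<Sum>m=0..j. (S m)^2 * dd g m)"
  define G where "G = g j"
  have D: "D = (\<Sum>m=0..j. S m * dd g m)"
  proof -
    have "D = (\<Sum>s=0..j. (S s - S (Suc s)) * g s)"
      unfolding D_def gDelta_def by (rule sum.cong) (auto simp: vS)
    then show ?thesis using abel[where S=S and j=j and g=g] SS by simp
  qed
  have Q: "gDelta_sq j g v = 2 * V * D - E"
  proof -
    have "gDelta_sq j g v = (\<Sum>s=0..j. 2 * V * ((S s - S (Suc s)) * g s) - ((S s)^2 - (S (Suc s))^2) * g s)"
      unfolding gDelta_sq_def by (rule sum.cong) (auto simp: vS power2_eq_square algebra_simps)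
    also have "\<dots> = 2 * V * (\<Sum>s=0..j. (S s - S (Suc s)) * g s) - (\<Sum>s=0..j. ((S s)^2 - (S (Suc s))^2) * g s)"
      by (simp add: sum_subtractf sum_distrib_left)
    finally show ?thesis using abel[where S=S and j=j and g=g] abel_sq[where S=S and j=j and g=g] SS D unfolding E_def by simp
  qed
  have Gpos: "G > 0"
  proof -
    have "(\<Sum>m=0..j. dd g m) > 0" by (rule sum_pos) (auto intro: ddpos)
    then show ?thesis using sum_dd[where j=j and g=g] G_def by simp
  qed
  have CS: "E - D^2 / G \<ge> 0"
  proof -
    define c where "c = D / G"
    have "0 \<le> (\<Sum>m=0..j. dd g m * (S m - c)^2)"
      by (rule sum_nonneg) (simp add: less_imp_le ddpos)
    also have "\<dots> = (\<Sum>m=0..j. (S m)^2 * dd g m - 2 * c * (S m * dd g m) + c^2 * dd g m)"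
      by (rule sum.cong) (auto simp: power2_eq_square algebra_simps)
    also have "\<dots> = E - 2 * c * D + c^2 * G"
      by (simp add: sum.distrib sum_subtractf sum_distrib_left[symmetric] E_def D G_def sum_dd)
    also have "\<dots> = E - D^2 / G" using Gpos by (simp add: c_def power2_eq_square field_simps)
    finally show ?thesis .
  qed
  have part1: "V * D \<ge> gDelta_sq j g v / 2 + D^2 / (2 * G)"
    using CS Q by (simp add: field_simps)
  define d where "d = dd g j"
  have dpos: "d > 0" using ddpos d_def by simp
  have gp: "g j - gprev j g = d" by (simp add: d_def dd_def gprev_def)
  have Eg: "E \<ge> (S j)^2 * d"
  proof -
    have "E = (\<Sum>m\<in>{0..<j}. (S m)^2 * dd g m) + (S j)^2 * d"
      unfolding E_def d_def by (simp add: atLeastLessThanSuc_atLeastAtMost[symmetric])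
    moreover have "(\<Sum>m\<in>{0..<j}. (S m)^2 * dd g m) \<ge> 0"
      by (rule sum_nonneg) (simp add: less_imp_le ddpos)
    ultimately show ?thesis by simp
  qed
  have sq: "(d * S j - D)^2 / d \<ge> 0" using dpos by simp
  have eq2: "(d * S j - D)^2 / d = d * (S j)^2 - 2 * S j * D + D^2 / d"
    using dpos by (simp add: power2_eq_square field_simps)
  have part2: "(V - S j) * D \<ge> gDelta_sq j g v / 2 - D^2 / (2 * d)"
  proof -
    have "gDelta_sq j g v / 2 - D^2 / (2 * d) = V * D - E / 2 - D^2 / (2*d)"
      using Q by simp
    also have "\<dots> \<le> V * D - (S j)^2 * d / 2 - D^2 / (2*d)" using Eg by simp
    also have "\<dots> \<le> (V - S j) * D" using sq eq2 by (simp add: algebra_simps)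
    finally show ?thesis .
  qed
  show ?thesis using part1 part2 gp
    unfolding D_def G_def V_def by (simp add: vS[of j, unfolded V_def])
qed

end
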